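(* For every $n\geq 1$, the alternating Eulerian polynomial $\widehat{A}_n(t)$ is palindromic and unimodal. Moreover, if we write $$\widehat{A}_n(t)=\sum_{k=0}^{\lfloor (n-1)/2\rfloor}a(n,k)(-2t)^{k}(1+t)^{n-1-2k}\quad\text{and}\quad a_n(x)=\sum_{k=0}^{\lfloor (n-1)/2\rfloor}a(n,k)x^k,$$ then $a_n(x-1)=R_{n-1}(x)$, the descent polynomial over Simsun permutations of length $n-1$.
   Context: $\mathfrak{S}_n$ is the set of permutations $\pi=\pi_1\pi_2\cdots\pi_n$ of $[n]=\{1,\dots,n\}$. The alternating descent set of $\pi\in\mathfrak{S}_n$ is $\widehat{D}(\pi)=\{2i:\pi_{2i}<\pi_{2i+1}\}\cup\{2i+1:\pi_{2i+1}>\pi_{2i+2}\}$ (indices in $[n-1]$), and ${\rm altdes}(\pi)=|\widehat{D}(\pi)|$. The alternating Eulerian polynomial is $\widehat{A}_n(t)=\sum_{\pi\in\mathfrak{S}_n}t^{{\rm altdes}(\pi)}$. A polynomial $\sum_{i=0}^N h_it^i$ is unimodal if $h_0\le\cdots\le h_c\ge h_{c+1}\ge\cdots\ge h_N$ for some $c$, and palindromic if $h_i=h_{N-i}$ for all $i$. A descent of $\pi$ is an index $i$ with $\pi_i>\pi_{i+1}$; ${\rm des}(\pi)$ is the number of descents. A double descent of $\pi\in\mathfrak{S}_n$ is an index $i$, $2\le i\le n-1$, with $\pi_{i-1}>\pi_i>\pi_{i+1}$. A permutation in $\mathfrak{S}_n$ is Simsun if it has no double descents, and for every $k$ the word obtained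 by removing the letters $n,n-1,\dots,k$ also has no double descents. $R_n(x)=\sum_{\pi}x^{{\rm des}(\pi)}$, summed over Simsun permutations $\pi\in\mathfrak{S}_n$. *)

theory Defs
  imports "HOL-Combinatorics.Multiset_Permutations" "HOL-Computational_Algebra.Polynomial"
begin

(* Permutations of [n] are lists xs \<in> permutations_of_set {1..n}; the i-th letter
   pi_i (1-based) is xs ! (i - 1). *)

definition alt_des_set :: "nat list \<Rightarrow> nat set" where
  "alt_des_set xs = {i \<in> {1..<length xs}.
      (even i \<and> xs ! (i - 1) < xs ! i) \<or> (odd i \<and> xs ! (i - 1) > xs ! i)}"

definition altdes :: "nat list \<Rightarrow> nat" where
  "altdes xs = card (alt_des_set xs)"

definition alt_eulerian :: "nat \<Rightarrow> int poly" where
  "alt_eulerian n = (\<Sum>xs\<in>permutations_of_set {1..n}. monom 1 (altdes xs))"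

definition des :: "nat list \<Rightarrow> nat" where
  "des xs = card {i \<in> {1..<length xs}. xs ! (i - 1) > xs ! i}"

definition no_double_descents :: "nat list \<Rightarrow> bool" where
  "no_double_descents xs \<longleftrightarrow>
     \<not> (\<exists>i. 2 \<le> i \<and> i + 1 \<le> length xs \<and> xs ! (i - 2) > xs ! (i - 1) \<and> xs ! (i - 1) > xs ! i)"

(* Removing the letters n, n-1, ..., k leaves the letters < k. k = n+1 gives xs itself. *)
definition simsun :: "nat list \<Rightarrow> bool" where
  "simsun xs \<longleftrightarrow> (\<forall>k. no_double_descents (filter (\<lambda>x. x < k) xs))"

definition simsun_des_poly :: "nat \<Rightarrow> int poly" where
  "simsun_des_poly n = (\<Sum>xs\<in>{xs \<in> permutations_of_set {1..n}. simsun xs}. monom 1 (des xs))"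

definition palindromic :: "int poly \<Rightarrow> bool" where
  "palindromic p \<longleftrightarrow> (\<forall>i \<le> degree p. coeff p i = coeff p (degree p - i))"

definition unimodal :: "int poly \<Rightarrow> bool" where
  "unimodal p \<longleftrightarrow> (\<exists>c \<le> degree p.
      (\<forall>i j. i \<le> j \<and> j \<le> c \<longrightarrow> coeff p i \<le> coeff p j) \<and>
      (\<forall>i j. c \<le> i \<and> i \<le> j \<and> j \<le> degree p \<longrightarrow> coeff p j \<le> coeff p i))"

end

theory Submission
  imports Defs
begin


fun cntp :: "(nat \<Rightarrow> nat \<Rightarrow> nat \<Rightarrow> bool) \<Rightarrow> nat \<Rightarrow> nat list \<Rightarrow> nat" where
  "cntp Q m (x # y # zs) = (if Q m x y then 1 else 0) + cntp Q (Suc m) (y # zs)"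
| "cntp Q m _ = 0"

lemma cntp_card:
  "card {j. Suc j < length xs \<and> Q (m + j) (xs ! j) (xs ! Suc j)} = cntp Q m xs"
proof (induction Q m xs rule: cntp.induct)
  case (1 Q m x y zs)
  let ?S = "{j. Suc j < length (y # zs) \<and> Q (Suc m + j) ((y # zs) ! j) ((y # zs) ! Suc j)}"
  have eq: "{j. Suc j < length (x # y # zs) \<and> Q (m + j) ((x # y # zs) ! j) ((x # y # zs) ! Suc j)}
      = (if Q m x y then {0} else {}) \<union> Suc ` ?S"
    apply (rule set_eqI)
    subgoal for j by (cases j) auto
    done
  have fin: "finite ?S" by (rule finite_subset[of _ "{..<length (y#zs)}"]) auto
  have "card ((if Q m x y then {0} else {}) \<union> Suc ` ?S) = (if Q m x y then 1 else 0) + card (Suc ` ?S)"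
    using fin by (auto simp: card_insert_if)
  also have "card (Suc ` ?S) = card ?S" by (simp add: card_image)
  finally show ?case using eq 1 by simp
qed auto

lemma cntp_append:
  "cntp Q m (xs @ y # ys) = cntp Q m (xs @ [y]) + cntp Q (m + length xs) (y # ys)"
proof (induction xs arbitrary: m)
  case Nil then show ?case by simp
next
  case (Cons x xs)
  show ?case
  proof (cases xs)
    case Nil then show ?thesis by simp
  next
    case (Cons x2 xs')
    then show ?thesis using Cons.IH[of "Suc m"] by simp
  qed
qed

lemma cntp_map:
  assumes "\<And>j a b. a \<in> S \<Longrightarrow> b \<in> S \<Longrightarrow> Q' (Suc j) (f a) (f b) = Q j a b"
  shows "set ys \<subseteq> S \<Longrightarrow> cntp Q' (Suc m) (map f ys) = cntp Q m ys"
  by (induction ys arbitrary: m rule: induct_list012) (auto simp: assms)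

definition QA :: "nat \<Rightarrow> nat \<Rightarrow> nat \<Rightarrow> bool" where
  "QA j a b \<longleftrightarrow> (odd j \<and> a < b) \<or> (even j \<and> b < a)"

definition QD :: "nat \<Rightarrow> nat \<Rightarrow> nat \<Rightarrow> bool" where
  "QD j a b \<longleftrightarrow> b < a"

lemma altdes_cntp: "altdes xs = cntp QA 0 xs"
proof -
  have "alt_des_set xs = Suc ` {j. Suc j < length xs \<and> QA (0 + j) (xs ! j) (xs ! Suc j)}"
    unfolding alt_des_set_def QA_def
    apply (rule set_eqI)
    subgoal for i by (cases i) auto
    done
  then show ?thesis unfolding altdes_def using cntp_card[of xs _ 0] by (simp add: card_image)
qed

lemma des_cntp: "des xs = cntp QD 0 xs"
proof -
  have "{i \<in> {1..<length xs}. xs ! (i - 1) > xs ! i} = Suc ` {j. Suc j < length xs \<and> QD (0 + j) (xs ! j) (xs ! Suc j)}"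
    unfolding QD_def
    apply (rule set_eqI)
    subgoal for i by (cases i) auto
    done
  then show ?thesis unfolding des_def using cntp_card[of xs _ 0] by (simp add: card_image)
qed



lemma cntp_single[simp]: "cntp Q m [x] = 0" by simp

lemma cntp_insert:
  assumes "\<And>j a b. a \<in> set s \<Longrightarrow> b \<in> set s \<Longrightarrow> Q (Suc j) (f a) (f b) = Q j a b"
  shows "cntp Q 0 (p @ v # map f s) + of_bool (p \<noteq> [] \<and> s \<noteq> [] \<and> Q (length p - 1) (last p) (hd s))
       = cntp Q 0 (p @ s) + of_bool (p \<noteq> [] \<and> Q (length p - 1) (last p) v)
         + of_bool (s \<noteq> [] \<and> Q (length p) v (f (hd s)))"
proof -
  have M: "cntp Q (Suc m) (map f s) = cntp Q m s" for m
    by (rule cntp_map[of "set s"]) (auto simp: assms)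
  have V: "cntp Q m (v # map f s) = of_bool (s \<noteq> [] \<and> Q m v (f (hd s))) + cntp Q m s" for m
    using M[of m] by (cases s) auto
  show ?thesis
  proof (cases p rule: rev_exhaust)
    case Nil
    then show ?thesis by (simp add: V)
  next
    case (snoc p' a)
    have A1: "cntp Q 0 (p @ v # map f s) = cntp Q 0 p + of_bool (Q (length p') a v) + cntp Q (length p) (v # map f s)"
      using cntp_append[of Q 0 "p' @ [a]" v "map f s"] cntp_append[of Q 0 p' a "[v]"] snoc by simp
    show ?thesis
    proof (cases s)
      case Nil
      then show ?thesis using A1 snoc by simp
    next
      case (Cons b s')
      have A2: "cntp Q 0 (p @ s) = cntp Q 0 p + of_bool (Q (length p') a b) + cntp Q (length p) s"
        using cntp_append[of Q 0 "p' @ [a]" b s'] cntp_append[of Q 0 p' a "[b]"] snoc Cons by simp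
      show ?thesis using A1 A2 V snoc Cons by simp
    qed
  qed
qed



definition rc :: "nat set \<Rightarrow> nat \<Rightarrow> nat" where
  "rc S y = the (map_of (zip (sorted_list_of_set S) (rev (sorted_list_of_set S))) y)"

lemma rc_nth:
  assumes "finite S" "i < card S"
  shows "rc S (sorted_list_of_set S ! i) = sorted_list_of_set S ! (card S - 1 - i)"
proof -
  let ?L = "sorted_list_of_set S"
  have "map_of (zip ?L (rev ?L)) (?L ! i) = Some (rev ?L ! i)"
    by (rule map_of_zip_nth) (use assms in auto)
  then show ?thesis using assms by (simp add: rc_def rev_nth)
qed

lemma rc_props:
  assumes "finite S" "a \<in> S"
  shows "rc S a \<in> S"
proof -
  let ?L = "sorted_list_of_set S"
  obtain i where i: "i < length ?L" "?L ! i = a" using assms by (metis in_set_conv_nth set_sorted_list_of_set)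
  have "card S - 1 - i < length ?L" using i by simp
  then have "?L ! (card S - 1 - i) \<in> S" using assms(1) nth_mem set_sorted_list_of_set by metis
  then show ?thesis using assms rc_nth[of S i] i by simp
qed

lemma rc_anti:
  assumes "finite S" "a \<in> S" "b \<in> S" "a < b"
  shows "rc S b < rc S a"
proof -
  let ?L = "sorted_list_of_set S"
  have ss: "sorted_wrt (<) ?L" by (rule strict_sorted_list_of_set)
  have len: "length ?L = card S" by simp
  obtain i where i: "i < length ?L" "?L ! i = a" using assms by (metis in_set_conv_nth set_sorted_list_of_set)
  obtain j where j: "j < length ?L" "?L ! j = b" using assms by (metis in_set_conv_nth set_sorted_list_of_set)
  have "i < j"
  proof (rule ccontr)
    assume "\<not> i < j"
    then have "j < i \<or> j = i" by auto
    then show False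
    proof
      assume "j < i" then have "?L ! j < ?L ! i" using sorted_wrt_nth_less[OF ss] i by auto
      then show False using i j assms by simp
    next
      assume "j = i" then show False using i j assms by simp
    qed
  qed
  have "?L ! (card S - 1 - j) < ?L ! (card S - 1 - i)"
    by (rule sorted_wrt_nth_less[OF ss]) (use i j \<open>i < j\<close> len in auto)
  then show ?thesis using rc_nth[of S i] rc_nth[of S j] i j len assms by simp
qed

lemma rc_less_iff:
  assumes "finite S" "a \<in> S" "b \<in> S"
  shows "rc S a < rc S b \<longleftrightarrow> b < a"
proof
  assume h: "rc S a < rc S b"
  show "b < a"
  proof (rule ccontr)
    assume "\<not> b < a"
    then have "a < b \<or> a = b" by auto
    then show False using h rc_anti[OF assms(1) assms(2) assms(3)] by auto
  qed
next
  assume "b < a" then show "rc S a < rc S b" using rc_anti[OF assms(1) assms(3) assms(2)] by simp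
qed

lemma rc_inj: "finite S \<Longrightarrow> inj_on (rc S) S"
  unfolding inj_on_def
proof (intro ballI impI)
  fix a b assume "finite S" "a \<in> S" "b \<in> S" "rc S a = rc S b"
  then show "a = b" using rc_anti[of S a b] rc_anti[of S b a] by (cases a b rule: linorder_cases) auto
qed

lemma rc_image: "finite S \<Longrightarrow> rc S ` S = S"
  by (rule endo_inj_surj) (auto simp: rc_props rc_inj)



definition insm :: "(nat set \<Rightarrow> nat \<Rightarrow> nat) \<Rightarrow> nat \<Rightarrow> nat list \<Rightarrow> nat \<Rightarrow> nat list" where
  "insm F v xs i = take i xs @ v # map (F (set (drop i xs))) (drop i xs)"

definition goodF :: "(nat set \<Rightarrow> nat \<Rightarrow> nat) \<Rightarrow> bool" where
  "goodF F \<longleftrightarrow> (\<forall>S. finite S \<longrightarrow> inj_on (F S) S \<and> F S ` S = S)"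

lemma goodF_rc: "goodF rc" unfolding goodF_def by (simp add: rc_inj rc_image)
lemma goodF_id: "goodF (\<lambda>S. id)" unfolding goodF_def by simp

lemma insm_perm:
  assumes F: "goodF F" and p: "xs \<in> permutations_of_set A" and v: "v \<notin> A"
  shows "insm F v xs i \<in> permutations_of_set (insert v A)"
proof -
  have d: "distinct xs" and s: "set xs = A" using p by (auto simp: permutations_of_set_def)
  let ?S = "set (drop i xs)"
  have fin: "finite ?S" by simp
  have inj: "inj_on (F ?S) ?S" and im: "F ?S ` ?S = ?S" using F fin unfolding goodF_def by auto
  have un: "set (take i xs) \<union> set (drop i xs) = A"
    using s by (metis set_append append_take_drop_id)
  have st: "set (insm F v xs i) = insert v A"
    unfolding insm_def using im un by auto
  have disj: "set (take i xs) \<inter> set (drop i xs) = {}" using d by (simp add: set_take_disj_set_drop_if_distinct)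
  have tA: "set (take i xs) \<subseteq> A" and dA: "set (drop i xs) \<subseteq> A" using un by auto
  have dd: "distinct (take i xs)" "distinct (drop i xs)" using d by simp_all
  have "distinct (insm F v xs i)"
    unfolding insm_def using dd inj im disj v tA dA by (auto simp: distinct_map)
  with st show ?thesis by (simp add: permutations_of_set_def)
qed

lemma insm_inj:
  assumes F: "goodF F" and v1: "v \<notin> set xs" and v2: "v \<notin> set ys"
    and i: "i \<le> length xs" and j: "j \<le> length ys"
    and eq: "insm F v xs i = insm F v ys j"
  shows "xs = ys \<and> i = j"
proof -
  have tw: "takeWhile (\<lambda>x. x \<noteq> v) (insm F v zs k) = take k zs" if "v \<notin> set zs" for zs k
  proof -
    have "\<forall>x\<in>set (take k zs). x \<noteq> v" using that in_set_takeD by metis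
    then show ?thesis unfolding insm_def by (simp add: takeWhile_append2)
  qed
  have tk: "take i xs = take j ys" using tw[OF v1, of i] tw[OF v2, of j] eq by simp
  have "length (take i xs) = length (take j ys)" using tk by simp
  then have ij: "i = j" using i j by (simp add: min_def split: if_splits)
  let ?S = "set (drop i xs)" and ?T = "set (drop i ys)"
  have m: "map (F ?S) (drop i xs) = map (F ?T) (drop i ys)"
    using eq tk ij unfolding insm_def by simp
  have "F ?S ` ?S = ?S" "F ?T ` ?T = ?T" using F unfolding goodF_def by auto
  then have ST: "?S = ?T" using arg_cong[OF m, of set] by simp
  have "inj_on (F ?S) ?S" using F unfolding goodF_def by auto
  then have "inj_on (F ?S) (set (drop i xs) \<union> set (drop i ys))" using ST by simp
  then have "drop i xs = drop i ys" using m ST map_inj_on by (metis)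
  then have "take i xs @ drop i xs = take j ys @ drop j ys" using tk ij by simp
  then show ?thesis using ij by simp
qed

lemma sum_reindex_pairs:
  fixes g :: "'a \<Rightarrow> 'b \<Rightarrow> 'c" and h :: "'c \<Rightarrow> 'd::comm_monoid_add"
  assumes fa: "finite A" and fb: "finite B" and fc: "finite C"
    and inj: "\<And>a b a' b'. a \<in> A \<Longrightarrow> b \<in> B \<Longrightarrow> a' \<in> A \<Longrightarrow> b' \<in> B \<Longrightarrow> g a b = g a' b' \<Longrightarrow> a = a' \<and> b = b'"
    and into: "\<And>a b. a \<in> A \<Longrightarrow> b \<in> B \<Longrightarrow> g a b \<in> C"
    and card: "card A * card B = card C"
  shows "(\<Sum>c\<in>C. h c) = (\<Sum>a\<in>A. \<Sum>b\<in>B. h (g a b))"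
proof -
  have injp: "inj_on (case_prod g) (A \<times> B)" unfolding inj_on_def using inj by auto
  have sub: "case_prod g ` (A \<times> B) \<subseteq> C" using into by auto
  have "card (case_prod g ` (A \<times> B)) = card C" using injp card by (simp add: card_image card_cartesian_product)
  then have "case_prod g ` (A \<times> B) = C" using sub fc by (simp add: card_subset_eq)
  then have bij: "bij_betw (case_prod g) (A \<times> B) C" using injp by (simp add: bij_betw_def)
  have "(\<Sum>c\<in>C. h c) = (\<Sum>x\<in>A \<times> B. h (case_prod g x))"
    using sum.reindex_bij_betw[OF bij, of h] by simp
  also have "\<dots> = (\<Sum>a\<in>A. \<Sum>b\<in>B. h (g a b))" by (simp add: sum.cartesian_product split_def)
  finally show ?thesis .
qed

lemma perm_length: "xs \<in> permutations_of_set {1..n} \<Longrightarrow> length xs = n"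
  using length_finite_permutations_of_set by fastforce

lemma sum_insm:
  fixes h :: "nat list \<Rightarrow> 'd::comm_monoid_add"
  assumes F: "goodF F"
  shows "(\<Sum>s\<in>permutations_of_set {1..Suc n}. h s)
     = (\<Sum>xs\<in>permutations_of_set {1..n}. \<Sum>i\<in>{..n}. h (insm F (Suc n) xs i))"
proof (rule sum_reindex_pairs)
  show "card (permutations_of_set {1..n}) * card {..n} = card (permutations_of_set {1..Suc n})"
    by simp
  fix a b assume "a \<in> permutations_of_set {1..n}" "b \<in> {..n}"
  then show "insm F (Suc n) a b \<in> permutations_of_set {1..Suc n}"
    using insm_perm[OF F, of a "{1..n}" "Suc n" b] by (simp add: atLeastAtMostSuc_conv insert_commute)
next
  fix a b a' b' assume "a \<in> permutations_of_set {1..n}" "b \<in> {..n}" "a' \<in> permutations_of_set {1..n}" "b' \<in> {..n}"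
    "insm F (Suc n) a b = insm F (Suc n) a' b'"
  moreover have "length a = n" "length a' = n" using perm_length \<open>a \<in> _\<close> \<open>a' \<in> _\<close> by auto
  ultimately show "a = a' \<and> b = b'"
    using insm_inj[OF F, of "Suc n" a a' b b'] by (auto simp: permutations_of_set_def)
qed auto



lemma sum_insm_gen:
  fixes h :: "nat list \<Rightarrow> 'd::comm_monoid_add"
  assumes F: "goodF F" and fa: "finite A" and v: "v \<notin> A"
  shows "(\<Sum>s\<in>permutations_of_set (insert v A). h s)
     = (\<Sum>xs\<in>permutations_of_set A. \<Sum>i\<in>{..card A}. h (insm F v xs i))"
proof (rule sum_reindex_pairs)
  show "card (permutations_of_set A) * card {..card A} = card (permutations_of_set (insert v A))"
    using fa v by simp
  fix a b assume "a \<in> permutations_of_set A" "b \<in> {..card A}"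
  then show "insm F v a b \<in> permutations_of_set (insert v A)"
    using insm_perm[OF F, of a A v b] v by simp
next
  fix a b a' b' assume "a \<in> permutations_of_set A" "b \<in> {..card A}" "a' \<in> permutations_of_set A" "b' \<in> {..card A}"
    "insm F v a b = insm F v a' b'"
  moreover have "length a = card A" "length a' = card A"
    using length_finite_permutations_of_set \<open>a \<in> _\<close> \<open>a' \<in> _\<close> by auto
  ultimately show "a = a' \<and> b = b'"
    using insm_inj[OF F, of v a a' b b'] v by (auto simp: permutations_of_set_def)
qed (use fa in auto)

lemma sum_insm_max:
  fixes h :: "nat list \<Rightarrow> 'd::comm_monoid_add"
  assumes F: "goodF F"
  shows "(\<Sum>s\<in>permutations_of_set {1..Suc n}. h s)
     = (\<Sum>xs\<in>permutations_of_set {1..n}. \<Sum>i\<in>{..n}. h (insm F (Suc n) xs i))"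
proof -
  have "{1..Suc n} = insert (Suc n) {1..n}" by auto
  then show ?thesis using sum_insm_gen[OF F, of "{1..n}" "Suc n" h] by simp
qed

lemma sum_insm_min:
  fixes h :: "nat list \<Rightarrow> 'd::comm_monoid_add"
  assumes F: "goodF F"
  shows "(\<Sum>s\<in>permutations_of_set {1..Suc n}. h s)
     = (\<Sum>xs\<in>permutations_of_set {1..n}. \<Sum>i\<in>{..n}. h (map Suc (insm F 0 xs i)))"
proof -
  have e1: "{1..Suc n} = Suc ` {0..n}" by (simp add: image_Suc_atLeastAtMost)
  have e2: "{0..n} = insert 0 {1..n}" by auto
  have pe: "permutations_of_set {1..Suc n} = map Suc ` permutations_of_set {0..n}"
    by (subst e1, rule permutations_of_set_image_inj) simp
  have "(\<Sum>s\<in>permutations_of_set {1..Suc n}. h s) = (\<Sum>s\<in>map Suc ` permutations_of_set {0..n}. h s)"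
    by (simp only: pe)
  also have "\<dots> = (\<Sum>s\<in>permutations_of_set {0..n}. h (map Suc s))"
    by (rule sum.reindex_cong[where l = "map Suc"]) (auto simp: inj_on_def)
  also have "\<dots> = (\<Sum>xs\<in>permutations_of_set {1..n}. \<Sum>i\<in>{..n}. h (map Suc (insm F 0 xs i)))"
    unfolding e2 using sum_insm_gen[OF F, of "{1..n}" 0 "\<lambda>s. h (map Suc s)"] by simp
  finally show ?thesis .
qed

lemma cntp_map_same:
  assumes "\<And>j a b. Q j (f a) (f b) = Q j a b"
  shows "cntp Q m (map f ys) = cntp Q m ys"
  by (induction ys arbitrary: m rule: induct_list012) (auto simp: assms)

lemma altdes_map_Suc: "altdes (map Suc xs) = altdes xs"
  unfolding altdes_cntp by (rule cntp_map_same) (auto simp: QA_def)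

definition eA :: "nat list \<Rightarrow> nat \<Rightarrow> nat" where
  "eA xs i = of_bool (0 < i \<and> i < length xs \<and> QA (i - 1) (xs ! (i - 1)) (xs ! i))"

lemma altdes_insm_gen:
  assumes p: "xs \<in> permutations_of_set {1..n}" and i: "i \<le> n"
  shows "altdes (insm rc v xs i) + eA xs i
       = altdes xs + of_bool (0 < i \<and> QA (i - 1) (xs ! (i - 1)) v)
         + of_bool (i < n \<and> QA i v (rc (set (drop i xs)) (xs ! i)))"
proof -
  have len: "length xs = n" using p by (rule perm_length)
  let ?S = "set (drop i xs)"
  have cond: "\<And>j a b. a \<in> ?S \<Longrightarrow> b \<in> ?S \<Longrightarrow> QA (Suc j) (rc ?S a) (rc ?S b) = QA j a b"
    unfolding QA_def by (auto simp: rc_less_iff)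
  have ci: "cntp QA 0 (take i xs @ v # map (rc ?S) (drop i xs)) + of_bool (take i xs \<noteq> [] \<and> drop i xs \<noteq> [] \<and> QA (length (take i xs) - 1) (last (take i xs)) (hd (drop i xs)))
       = cntp QA 0 (take i xs @ drop i xs) + of_bool (take i xs \<noteq> [] \<and> QA (length (take i xs) - 1) (last (take i xs)) v)
         + of_bool (drop i xs \<noteq> [] \<and> QA (length (take i xs)) v (rc ?S (hd (drop i xs))))"
    by (rule cntp_insert) (rule cond)
  have t1: "take i xs \<noteq> [] \<longleftrightarrow> 0 < i" using len i by auto
  have t2: "drop i xs \<noteq> [] \<longleftrightarrow> i < n" using len i by auto
  have t3: "0 < i \<Longrightarrow> last (take i xs) = xs ! (i - 1)" using len i by (subst last_conv_nth) (auto simp: min_def)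
  have t4: "i < n \<Longrightarrow> hd (drop i xs) = xs ! i" using len i by (simp add: hd_drop_conv_nth)
  have t5: "length (take i xs) = i" using len i by simp
  show ?thesis using ci t1 t2 t3 t4 t5 len unfolding altdes_cntp insm_def eA_def
    by (cases "0 < i"; cases "i < n") auto
qed

lemma altdes_imax:
  assumes p: "xs \<in> permutations_of_set {1..n}" and i: "i \<le> n"
  shows "altdes (insm rc (Suc n) xs i) + eA xs i
       = altdes xs + of_bool (0 < i \<and> even i) + of_bool (i < n \<and> even i)"
proof -
  have len: "length xs = n" using p by (rule perm_length)
  have st: "set xs = {1..n}" using p by (simp add: permutations_of_set_def)
  have a1: "0 < i \<Longrightarrow> xs ! (i - 1) < Suc n"
    using st len i by (metis atLeastAtMost_iff diff_less le_imp_less_Suc less_le_trans nth_mem zero_less_one)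
  have a2: "i < n \<Longrightarrow> rc (set (drop i xs)) (xs ! i) < Suc n"
  proof -
    assume "i < n"
    then have "xs ! i \<in> set (drop i xs)" using len by (simp add: in_set_conv_nth) (metis add.right_neutral nth_drop length_drop zero_less_diff)
    then have "rc (set (drop i xs)) (xs ! i) \<in> set (drop i xs)" by (simp add: rc_props)
    then show ?thesis using st by (metis atLeastAtMost_iff in_set_dropD le_imp_less_Suc)
  qed
  show ?thesis using altdes_insm_gen[OF p i, of "Suc n"] a1 a2 unfolding QA_def
    by (cases "0 < i"; cases "i < n") auto
qed

lemma altdes_imin:
  assumes p: "xs \<in> permutations_of_set {1..n}" and i: "i \<le> n"
  shows "altdes (map Suc (insm rc 0 xs i)) + eA xs i
       = altdes xs + of_bool (0 < i \<and> odd i) + of_bool (i < n \<and> odd i)"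
proof -
  have len: "length xs = n" using p by (rule perm_length)
  have st: "set xs = {1..n}" using p by (simp add: permutations_of_set_def)
  have a1: "0 < i \<Longrightarrow> 0 < xs ! (i - 1)"
    using st len i by (metis atLeastAtMost_iff diff_less le_less_trans less_le_trans nth_mem zero_less_one less_one not_less)
  have a2: "i < n \<Longrightarrow> 0 < rc (set (drop i xs)) (xs ! i)"
  proof -
    assume "i < n"
    then have "xs ! i \<in> set (drop i xs)" using len by (simp add: in_set_conv_nth) (metis add.right_neutral nth_drop length_drop zero_less_diff)
    then have "rc (set (drop i xs)) (xs ! i) \<in> set (drop i xs)" by (simp add: rc_props)
    then show ?thesis using st by (metis atLeastAtMost_iff in_set_dropD less_le_trans zero_less_one)
  qed
  show ?thesis using altdes_insm_gen[OF p i, of 0] a1 a2 unfolding QA_def altdes_map_Suc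
    by (cases "0 < i"; cases "i < n") auto
qed



definition X :: "int poly" where "X = [:0,1:]"

lemma pderiv_X: "pderiv X = 1" by (simp add: X_def pderiv_pCons)

lemma monom_X: "monom 1 k = X ^ k" by (simp add: X_def monom_altdef)

lemma smult_of_nat: "smult (of_nat k) p = (of_nat k :: int poly) * p"
  by (simp add: of_nat_poly)

definition Lop :: "nat \<Rightarrow> int poly \<Rightarrow> int poly" where
  "Lop n p = (2 + 2 * X) * p + (1 + X * X) * ((of_nat n - 1) * p + (1 - X) * pderiv p)"

lemma Lop_add: "Lop n (p + q) = Lop n p + Lop n q"
  unfolding Lop_def by (simp add: pderiv_add algebra_simps)

lemma Lop_0: "Lop n 0 = 0" unfolding Lop_def by simp

lemma Lop_sum: "Lop n (sum f A) = (\<Sum>x\<in>A. Lop n (f x))"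
  by (induction A rule: infinite_finite_induct) (auto simp: Lop_add Lop_0)

lemma Lop_monom:
  assumes "a \<le> n - 1" "1 \<le> n"
  shows "Lop n (X ^ a) = 2 * (X ^ a + X ^ (a+1)) + of_nat a * (X ^ (a-1) + X ^ (a+1))
      + of_nat (n - 1 - a) * (X ^ a + X ^ (a+2))"
proof -
  have c5: "(of_nat (n - 1 - a) :: int poly) = of_nat n - 1 - of_nat a" using assms by (simp add: of_nat_diff)
  show ?thesis
  proof (cases a)
    case 0
    then show ?thesis unfolding Lop_def c5
      by (simp add: algebra_simps)
  next
    case (Suc b)
    have pd: "pderiv (X ^ Suc b) = of_nat (Suc b) * X ^ b"
      by (simp only: pderiv_power_Suc pderiv_X smult_of_nat mult_1_right)
    have c6: "(of_nat (n - 1 - Suc b) :: int poly) = of_nat n - 2 - of_nat b" using assms Suc by (simp add: of_nat_diff)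
    have e: "Suc b - 1 = b" "Suc b + 1 = Suc (Suc b)" "Suc b + 2 = Suc (Suc (Suc b))" by simp_all
    show ?thesis unfolding Lop_def Suc pd c6 e
      by (simp add: algebra_simps)
  qed
qed



lemma card_eA:
  assumes p: "xs \<in> permutations_of_set {1..n}"
  shows "card {i\<in>{1..<n}. eA xs i = 1} = altdes xs"
proof -
  have len: "length xs = n" using p by (rule perm_length)
  have "{i\<in>{1..<n}. eA xs i = 1} = Suc ` {j. Suc j < length xs \<and> QA (0 + j) (xs ! j) (xs ! Suc j)}"
    unfolding eA_def using len
    apply (intro set_eqI)
    subgoal for i by (cases i) auto
    done
  then show ?thesis using cntp_card[of xs QA 0] by (simp add: card_image altdes_cntp)
qed

lemma slot_sum:
  assumes n: "1 \<le> n" and p: "xs \<in> permutations_of_set {1..n}"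
  shows "(\<Sum>i\<in>{..n}. X ^ altdes (insm rc (Suc n) xs i) + X ^ altdes (map Suc (insm rc 0 xs i)))
       = Lop n (X ^ altdes xs)"
proof -
  define a where "a = altdes xs"
  define G where "G i = X ^ altdes (insm rc (Suc n) xs i) + X ^ altdes (map Suc (insm rc 0 xs i))" for i
  define I where "I = {i\<in>{1..<n}. eA xs i = 1}"
  define J where "J = {i\<in>{1..<n}. eA xs i \<noteq> 1}"
  have e01: "eA xs i = 0 \<or> eA xs i = 1" for i unfolding eA_def by simp
  have IJ: "{1..<n} = I \<union> J" "I \<inter> J = {}" unfolding I_def J_def by auto
  have cI: "card I = a" unfolding I_def a_def using card_eA[OF p] .
  have "card I + card J = n - 1" using IJ card_Un_disjoint[of I J] by (metis card_atLeastLessThan finite_Un finite_atLeastLessThan)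
  then have cJ: "card J = n - 1 - a" and an: "a \<le> n - 1" using cI by auto
  have G0: "G 0 = X ^ a + X ^ (a+1)"
  proof -
    have "eA xs 0 = 0" unfolding eA_def by simp
    then show ?thesis using altdes_imax[OF p, of 0] altdes_imin[OF p, of 0] n unfolding G_def a_def by simp
  qed
  have Gn: "G n = X ^ a + X ^ (a+1)"
  proof -
    have "eA xs n = 0" unfolding eA_def using perm_length[OF p] by simp
    then show ?thesis using altdes_imax[OF p, of n] altdes_imin[OF p, of n] n unfolding G_def a_def
      by (cases "even n") auto
  qed
  have GI: "G i = X ^ (a-1) + X ^ (a+1)" if "i \<in> I" for i
  proof -
    have i: "0 < i" "i < n" "eA xs i = 1" using that unfolding I_def by auto
    have h1: "altdes (insm rc (Suc n) xs i) + 1 = a + of_bool (even i) + of_bool (even i)"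
      using altdes_imax[OF p, of i] i unfolding a_def by simp
    have h2: "altdes (map Suc (insm rc 0 xs i)) + 1 = a + of_bool (odd i) + of_bool (odd i)"
      using altdes_imin[OF p, of i] i unfolding a_def by simp
    show ?thesis
    proof (cases "even i")
      case True
      then have "altdes (insm rc (Suc n) xs i) = a + 1" "altdes (map Suc (insm rc 0 xs i)) = a - 1"
        using h1 h2 by simp_all
      then show ?thesis unfolding G_def by (simp add: add.commute)
    next
      case False
      then have "altdes (insm rc (Suc n) xs i) = a - 1" "altdes (map Suc (insm rc 0 xs i)) = a + 1"
        using h1 h2 by simp_all
      then show ?thesis unfolding G_def by simp
    qed
  qed
  have GJ: "G i = X ^ a + X ^ (a+2)" if "i \<in> J" for i
  proof -
    have i: "0 < i" "i < n" "eA xs i = 0" using that e01[of i] unfolding J_def by auto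
    show ?thesis using altdes_imax[OF p, of i] altdes_imin[OF p, of i] i unfolding G_def a_def
      by (cases "even i") (auto simp: add.commute)
  qed
  have dom: "{..n} = insert 0 (insert n {1..<n})" using n by auto
  have "(\<Sum>i\<in>{..n}. G i) = G 0 + (G n + (\<Sum>i\<in>{1..<n}. G i))"
    unfolding dom using n by (simp add: sum.insert)
  also have "(\<Sum>i\<in>{1..<n}. G i) = (\<Sum>i\<in>I. G i) + (\<Sum>i\<in>J. G i)"
    unfolding IJ(1) by (rule sum.union_disjoint) (use IJ in \<open>auto simp: I_def J_def\<close>)
  also have "(\<Sum>i\<in>I. G i) = of_nat a * (X ^ (a-1) + X ^ (a+1))"
    using GI cI by (simp add: sum.cong[OF refl GI])
  also have "(\<Sum>i\<in>J. G i) = of_nat (n - 1 - a) * (X ^ a + X ^ (a+2))"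
    using GJ cJ by (simp add: sum.cong[OF refl GJ])
  finally have "(\<Sum>i\<in>{..n}. G i) = 2 * (X ^ a + X ^ (a+1)) + of_nat a * (X ^ (a-1) + X ^ (a+1))
      + of_nat (n - 1 - a) * (X ^ a + X ^ (a+2))" using G0 Gn by (simp add: algebra_simps)
  then show ?thesis using Lop_monom[OF an n] unfolding G_def a_def by simp
qed

theorem alt_rec:
  assumes n: "1 \<le> n"
  shows "2 * alt_eulerian (Suc n) = Lop n (alt_eulerian n)"
proof -
  have ae: "alt_eulerian m = (\<Sum>xs\<in>permutations_of_set {1..m}. X ^ altdes xs)" for m
    unfolding alt_eulerian_def monom_X ..
  have "2 * alt_eulerian (Suc n) = alt_eulerian (Suc n) + alt_eulerian (Suc n)" by simp
  also have "\<dots> = (\<Sum>xs\<in>permutations_of_set {1..n}. \<Sum>i\<in>{..n}. X ^ altdes (insm rc (Suc n) xs i))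
      + (\<Sum>xs\<in>permutations_of_set {1..n}. \<Sum>i\<in>{..n}. X ^ altdes (map Suc (insm rc 0 xs i)))"
    unfolding ae using sum_insm_max[OF goodF_rc, of "\<lambda>s. X ^ altdes s" n]
      sum_insm_min[OF goodF_rc, of "\<lambda>s. X ^ altdes s" n] by simp
  also have "\<dots> = (\<Sum>xs\<in>permutations_of_set {1..n}. Lop n (X ^ altdes xs))"
    by (simp add: sum.distrib[symmetric] slot_sum[OF n])
  also have "\<dots> = Lop n (alt_eulerian n)" unfolding ae Lop_sum ..
  finally show ?thesis .
qed



fun nddr :: "nat list \<Rightarrow> bool" where
  "nddr (a # b # c # zs) = (\<not> (b < a \<and> c < b) \<and> nddr (b # c # zs))"
| "nddr _ = True"

lemma ndd_nddr: "no_double_descents xs \<longleftrightarrow> nddr xs"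
proof (induction xs rule: nddr.induct)
  case (1 a b c zs)
  have "(\<exists>i. 2 \<le> i \<and> i + 1 \<le> length (a # b # c # zs) \<and> (a # b # c # zs) ! (i - 2) > (a # b # c # zs) ! (i - 1)
          \<and> (a # b # c # zs) ! (i - 1) > (a # b # c # zs) ! i)
     \<longleftrightarrow> (b < a \<and> c < b) \<or> (\<exists>i. 2 \<le> i \<and> i + 1 \<le> length (b # c # zs) \<and> (b # c # zs) ! (i - 2) > (b # c # zs) ! (i - 1)
          \<and> (b # c # zs) ! (i - 1) > (b # c # zs) ! i)" (is "?L \<longleftrightarrow> ?R")
  proof
    assume ?L
    then obtain i where i: "2 \<le> i" "i + 1 \<le> length (a # b # c # zs)" "(a # b # c # zs) ! (i - 2) > (a # b # c # zs) ! (i - 1)"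
          "(a # b # c # zs) ! (i - 1) > (a # b # c # zs) ! i" by blast
    show ?R
    proof (cases "i = 2")
      case True then show ?thesis using i by simp
    next
      case False
      then obtain j where j: "i = Suc j" "2 \<le> j" using i(1) by (cases i) auto
      then obtain k where k: "j = Suc (Suc k)" by (metis add_2_eq_Suc le_Suc_ex)
      show ?thesis using i j k by (intro disjI2 exI[of _ j]) (auto simp: nth_Cons')
    qed
  next
    assume ?R
    then show ?L
    proof
      assume "b < a \<and> c < b" then show ?L by (intro exI[of _ 2]) auto
    next
      assume "\<exists>i. 2 \<le> i \<and> i + 1 \<le> length (b # c # zs) \<and> (b # c # zs) ! (i - 2) > (b # c # zs) ! (i - 1)
          \<and> (b # c # zs) ! (i - 1) > (b # c # zs) ! i"
      then obtain j where j: "2 \<le> j" "j + 1 \<le> length (b # c # zs)" "(b # c # zs) ! (j - 2) > (b # c # zs) ! (j - 1)"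
          "(b # c # zs) ! (j - 1) > (b # c # zs) ! j" by blast
      then obtain k where k: "j = Suc (Suc k)" by (metis add_2_eq_Suc le_Suc_ex)
      show ?L using j k by (intro exI[of _ "Suc j"]) (auto simp: nth_Cons')
    qed
  qed
  then show ?case using 1 unfolding no_double_descents_def by simp
next
  case ("2_1") then show ?case unfolding no_double_descents_def by simp
next
  case ("2_2" v) then show ?case unfolding no_double_descents_def by simp
next
  case ("2_3" v va) then show ?case unfolding no_double_descents_def by (auto simp: nth_Cons')
qed

lemma nddr_Cons2: "nddr (x # y # zs) = ((zs \<noteq> [] \<longrightarrow> \<not> (y < x \<and> hd zs < y)) \<and> nddr (y # zs))"
  by (cases zs) auto

lemma nddr_max_Cons:
  assumes "\<forall>x\<in>set s. x < v"
  shows "nddr (v # s) \<longleftrightarrow> nddr s \<and> \<not> (\<exists>b c s'. s = b # c # s' \<and> c < b)"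
proof (cases s)
  case (Cons b s') then show ?thesis using assms by (cases s') auto
qed simp

lemma nddr_append_max:
  assumes "\<forall>x\<in>set p. x < v" "\<forall>x\<in>set s. x < v"
  shows "nddr (p @ v # s) \<longleftrightarrow> nddr p \<and> nddr s \<and> \<not> (\<exists>b c s'. s = b # c # s' \<and> c < b)"
  using assms
proof (induction p rule: induct_list012)
  case 1
  then show ?case using nddr_max_Cons[of s v] by simp
next
  case (2 x)
  have "nddr (x # v # s) = nddr (v # s)" using 2 by (cases s) simp_all
  then show ?case using nddr_max_Cons[of s v] 2 by simp
next
  case (3 x y zs)
  then show ?case by (cases zs) (auto simp: nddr_Cons2)
qed

lemma nddr_appendD: "nddr (p @ s) \<Longrightarrow> nddr p \<and> nddr s"
proof (induction p rule: induct_list012)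
  case 1 then show ?case by simp
next
  case (2 x) then show ?case
  proof (cases s)
    case (Cons b s') then show ?thesis using 2 by (cases s') auto
  qed simp
next
  case (3 x y zs) then show ?case by (cases zs) (auto simp: nddr_Cons2)
qed



lemma filter_filter_lt: "filter (\<lambda>x. x < k) (filter (\<lambda>x. x < m) (xs::nat list)) = filter (\<lambda>x. x < min k m) xs"
  by (simp add: filter_filter, rule filter_cong, auto simp: min_def)

lemma simsun_split:
  assumes "\<forall>x\<in>set s. x < Suc (Suc n)"
  shows "simsun s \<longleftrightarrow> simsun (filter (\<lambda>x. x < Suc n) s) \<and> no_double_descents s"
proof
  assume h: "simsun s"
  have "filter (\<lambda>x. x < Suc (Suc n)) s = s" using assms by (simp add: filter_id_conv)
  moreover have "no_double_descents (filter (\<lambda>x. x < Suc (Suc n)) s)" using h unfolding simsun_def by blast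
  ultimately have "no_double_descents s" by simp
  moreover have "simsun (filter (\<lambda>x. x < Suc n) s)"
    unfolding simsun_def filter_filter_lt using h unfolding simsun_def by blast
  ultimately show "simsun (filter (\<lambda>x. x < Suc n) s) \<and> no_double_descents s" by simp
next
  assume h: "simsun (filter (\<lambda>x. x < Suc n) s) \<and> no_double_descents s"
  show "simsun s" unfolding simsun_def
  proof
    fix k
    show "no_double_descents (filter (\<lambda>x. x < k) s)"
    proof (cases "k \<le> Suc n")
      case True
      then have "filter (\<lambda>x. x < k) s = filter (\<lambda>x. x < k) (filter (\<lambda>x. x < Suc n) s)"
        by (simp add: filter_filter_lt min_def) (rule filter_cong, auto)
      then show ?thesis using h unfolding simsun_def by simp
    next
      case False
      then have "filter (\<lambda>x. x < k) s = s" using assms by (auto simp: filter_id_conv)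
      then show ?thesis using h by simp
    qed
  qed
qed

lemma insm_id: "insm (\<lambda>S. id) v xs i = take i xs @ v # drop i xs"
  by (simp add: insm_def)

definition bad :: "nat list \<Rightarrow> nat \<Rightarrow> nat \<Rightarrow> bool" where
  "bad xs n i \<longleftrightarrow> i + 1 < n \<and> xs ! (i + 1) < xs ! i"

context
  fixes xs :: "nat list" and n :: nat
  assumes p: "xs \<in> permutations_of_set {1..n}"
begin

lemma len: "length xs = n" using p by (rule perm_length)
lemma st: "set xs = {1..n}" using p by (simp add: permutations_of_set_def)

lemma filter_ins: "filter (\<lambda>x. x < Suc n) (insm (\<lambda>S. id) (Suc n) xs i) = xs"
proof -
  have "\<forall>x\<in>set xs. x < Suc n" using st by auto
  then have "\<forall>x\<in>set (take i xs). x < Suc n" "\<forall>x\<in>set (drop i xs). x < Suc n"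
    by (auto dest: in_set_takeD in_set_dropD)
  then show ?thesis unfolding insm_id by (simp add: filter_id_conv)
qed

lemma simsun_ins:
  assumes i: "i \<le> n"
  shows "simsun (insm (\<lambda>S. id) (Suc n) xs i) \<longleftrightarrow> simsun xs \<and> \<not> bad xs n i"
proof -
  let ?s = "insm (\<lambda>S. id) (Suc n) xs i"
  have lt: "\<forall>x\<in>set xs. x < Suc n" using st by auto
  then have lt2: "\<forall>x\<in>set (take i xs). x < Suc n" "\<forall>x\<in>set (drop i xs). x < Suc n"
    by (auto dest: in_set_takeD in_set_dropD)
  have ss: "\<forall>x\<in>set ?s. x < Suc (Suc n)" using lt2 unfolding insm_id by auto
  have sx: "simsun xs \<Longrightarrow> nddr xs"
  proof -
    assume "simsun xs"
    then have "no_double_descents (filter (\<lambda>x. x < Suc n) xs)" unfolding simsun_def by blast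
    moreover have "filter (\<lambda>x. x < Suc n) xs = xs" using lt by (simp add: filter_id_conv)
    ultimately show "nddr xs" by (simp add: ndd_nddr)
  qed
  have badeq: "(\<exists>b c s'. drop i xs = b # c # s' \<and> c < b) \<longleftrightarrow> bad xs n i"
  proof
    assume "\<exists>b c s'. drop i xs = b # c # s' \<and> c < b"
    then obtain b c s' where bc: "drop i xs = b # c # s'" "c < b" by blast
    moreover have "length (drop i xs) = n - i" using len by simp
    moreover have "drop i xs ! 0 = xs ! i" "drop i xs ! 1 = xs ! (i + 1)" using len i by simp_all
    ultimately have "xs ! i = b" "xs ! (i+1) = c" "i + 1 < n" by auto
    then show "bad xs n i" unfolding bad_def using bc by simp
  next
    assume "bad xs n i"
    then have "i + 1 < n" "xs ! (i + 1) < xs ! i" unfolding bad_def by auto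
    then have "drop i xs = xs ! i # drop (Suc i) xs" using len by (simp add: Cons_nth_drop_Suc)
    moreover have "drop (Suc i) xs = xs ! (i+1) # drop (Suc (Suc i)) xs" using len \<open>i + 1 < n\<close> by (simp add: Cons_nth_drop_Suc)
    ultimately have "drop i xs = xs ! i # xs ! (i+1) # drop (i+2) xs" by simp
    then show "\<exists>b c s'. drop i xs = b # c # s' \<and> c < b" using \<open>xs ! (i + 1) < xs ! i\<close> by blast
  qed
  have "simsun ?s \<longleftrightarrow> simsun xs \<and> nddr ?s"
    using simsun_split[OF ss] filter_ins[of i] by (simp add: ndd_nddr)
  also have "\<dots> \<longleftrightarrow> simsun xs \<and> \<not> bad xs n i"
  proof -
    have "nddr ?s \<longleftrightarrow> nddr (take i xs) \<and> nddr (drop i xs) \<and> \<not> bad xs n i"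
      unfolding insm_id using nddr_append_max[OF lt2] badeq by blast
    moreover have "nddr xs \<Longrightarrow> nddr (take i xs) \<and> nddr (drop i xs)"
      using nddr_appendD[of "take i xs" "drop i xs"] by simp
    ultimately show ?thesis using sx by blast
  qed
  finally show ?thesis .
qed

lemma des_ins:
  assumes i: "i \<le> n"
  shows "des (insm (\<lambda>S. id) (Suc n) xs i) + of_bool (0 < i \<and> i < n \<and> xs ! i < xs ! (i - 1))
       = des xs + of_bool (i < n)"
proof -
  have c: "cntp QD 0 (take i xs @ Suc n # map id (drop i xs)) + of_bool (take i xs \<noteq> [] \<and> drop i xs \<noteq> [] \<and> QD (length (take i xs) - 1) (last (take i xs)) (hd (drop i xs)))
       = cntp QD 0 (take i xs @ drop i xs) + of_bool (take i xs \<noteq> [] \<and> QD (length (take i xs) - 1) (last (take i xs)) (Suc n))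
         + of_bool (drop i xs \<noteq> [] \<and> QD (length (take i xs)) (Suc n) (id (hd (drop i xs))))"
    by (rule cntp_insert) (simp add: QD_def)
  have t1: "take i xs \<noteq> [] \<longleftrightarrow> 0 < i" using len i by auto
  have t2: "drop i xs \<noteq> [] \<longleftrightarrow> i < n" using len i by auto
  have t3: "0 < i \<Longrightarrow> last (take i xs) = xs ! (i - 1)" using len i by (subst last_conv_nth) (auto simp: min_def)
  have t4: "i < n \<Longrightarrow> hd (drop i xs) = xs ! i" using len i by (simp add: hd_drop_conv_nth)
  have t5: "0 < i \<Longrightarrow> xs ! (i - 1) < Suc n"
  proof -
    assume "0 < i" then have "xs ! (i - 1) \<in> set xs" using len i by simp
    then show ?thesis using st by auto
  qed
  have t6: "i < n \<Longrightarrow> xs ! i < Suc n"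
  proof -
    assume "i < n" then have "xs ! i \<in> set xs" using len by simp
    then show ?thesis using st by auto
  qed
  show ?thesis using c t1 t2 t3 t4 t5 t6 unfolding des_cntp insm_def QD_def
    by (cases "0 < i"; cases "i < n") auto
qed

end



lemma simsun_ndd:
  assumes p: "xs \<in> permutations_of_set {1..n}" and s: "simsun xs"
  shows "no_double_descents xs"
proof -
  have "\<forall>x\<in>set xs. x < Suc n" using p by (auto simp: permutations_of_set_def)
  then have "filter (\<lambda>x. x < Suc n) xs = xs" by (simp add: filter_id_conv)
  moreover have "no_double_descents (filter (\<lambda>x. x < Suc n) xs)" using s unfolding simsun_def by blast
  ultimately show ?thesis by simp
qed

lemma slot_simsun:
  fixes F :: "nat \<Rightarrow> 'a::comm_ring_1"
  assumes p: "xs \<in> permutations_of_set {1..n}" and nd: "no_double_descents xs"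
  shows "2 * des xs \<le> n \<and> (\<Sum>i\<in>{..n}. if bad xs n i then 0 else F (des (insm (\<lambda>S. id) (Suc n) xs i)))
     = of_nat (des xs + 1) * F (des xs) + of_nat (n - 2 * des xs) * F (des xs + 1)"
proof -
  have len: "length xs = n" using p by (rule perm_length)
  define d where "d = des xs"
  define E where "E = {i\<in>{1..<n}. xs ! i < xs ! (i - 1)}"
  define B where "B = {i. bad xs n i}"
  define G where "G i = F (des (insm (\<lambda>S. id) (Suc n) xs i))" for i
  have cE: "card E = d" unfolding E_def d_def des_def len by (rule arg_cong[where f = card]) auto
  have EB: "E = Suc ` B" unfolding E_def B_def bad_def
    apply (intro set_eqI)
    subgoal for i by (cases i) auto
    done
  have cB: "card B = d" using cE EB by (simp add: card_image)
  have disj: "E \<inter> B = {}"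
  proof (rule ccontr)
    assume "E \<inter> B \<noteq> {}"
    then obtain i where "i \<in> E" "i \<in> B" by blast
    then have i: "1 \<le> i" "i + 1 < n" "xs ! i < xs ! (i - 1)" "xs ! (i + 1) < xs ! i"
      unfolding E_def B_def bad_def by auto
    have "2 \<le> i + 1 \<and> i + 1 + 1 \<le> length xs \<and> xs ! (i + 1 - 2) > xs ! (i + 1 - 1) \<and> xs ! (i + 1 - 1) > xs ! (i + 1)"
      using i len by (simp add: numeral_2_eq_2)
    then show False using nd unfolding no_double_descents_def by blast
  qed
  have sub: "E \<union> B \<subseteq> {..<n}" unfolding E_def B_def bad_def by auto
  have finEB: "finite E" "finite B" using sub by (auto intro: finite_subset)
  have cEB: "card (E \<union> B) = 2 * d" using card_Un_disjoint[OF finEB disj] cE cB by simp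
  have bound: "2 * d \<le> n" using card_mono[OF _ sub] cEB by simp
  define R where "R = {..<n} - (E \<union> B)"
  have cR: "card R = n - 2 * d" unfolding R_def using card_Diff_subset[OF _ sub] cEB finEB by simp
  have part: "{..<n} = E \<union> (B \<union> R)" unfolding R_def using sub by auto
  have nbad: "\<not> bad xs n n" unfolding bad_def by simp
  have Gn: "G n = F d" using des_ins[OF p, of n] unfolding G_def d_def by simp
  have GE: "(if bad xs n i then 0 else G i) = F d" if "i \<in> E" for i
  proof -
    have "\<not> bad xs n i" using that disj unfolding B_def by auto
    moreover have "0 < i \<and> i < n \<and> xs ! i < xs ! (i - 1)" using that unfolding E_def by auto
    ultimately show ?thesis using des_ins[OF p, of i] unfolding G_def d_def by simp
  qed
  have GB: "(if bad xs n i then 0 else G i) = 0" if "i \<in> B" for i using that unfolding B_def by simp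
  have GR: "(if bad xs n i then 0 else G i) = F (d + 1)" if "i \<in> R" for i
  proof -
    have "\<not> bad xs n i" "i < n" "i \<notin> E" using that unfolding R_def B_def by auto
    moreover then have "\<not> (0 < i \<and> i < n \<and> xs ! i < xs ! (i - 1))" unfolding E_def by auto
    then have ob: "of_bool (0 < i \<and> i < n \<and> xs ! i < xs ! (i - 1)) = (0::nat)" by simp
    have "des (insm (\<lambda>S. id) (Suc n) xs i) = d + 1" using des_ins[OF p, of i] \<open>i < n\<close> unfolding d_def ob
      by simp
    then show ?thesis using \<open>\<not> bad xs n i\<close> unfolding G_def by simp
  qed
  have finR: "finite R" unfolding R_def by simp
  have "(\<Sum>i\<in>{..n}. if bad xs n i then 0 else G i) = G n + (\<Sum>i\<in>{..<n}. if bad xs n i then 0 else G i)"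
    using nbad by (simp add: lessThan_Suc_atMost[symmetric])
  also have "(\<Sum>i\<in>{..<n}. if bad xs n i then 0 else G i)
      = (\<Sum>i\<in>E. if bad xs n i then 0 else G i) + ((\<Sum>i\<in>B. if bad xs n i then 0 else G i) + (\<Sum>i\<in>R. if bad xs n i then 0 else G i))"
    unfolding part
    by (subst sum.union_disjoint, use finEB finR disj in \<open>auto simp: R_def\<close>)+
  also have "(\<Sum>i\<in>E. if bad xs n i then 0 else G i) = of_nat d * F d"
  proof -
    have "(\<Sum>i\<in>E. if bad xs n i then 0 else G i) = (\<Sum>i\<in>E. F d)" by (rule sum.cong) (auto simp: GE)
    then show ?thesis using cE by simp
  qed
  also have "(\<Sum>i\<in>B. if bad xs n i then 0 else G i) = 0"
    by (rule sum.neutral) (auto simp: GB)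
  also have "(\<Sum>i\<in>R. if bad xs n i then 0 else G i) = of_nat (n - 2 * d) * F (d + 1)"
  proof -
    have "(\<Sum>i\<in>R. if bad xs n i then 0 else G i) = (\<Sum>i\<in>R. F (d + 1))" by (rule sum.cong) (auto simp: GR)
    then show ?thesis using cR by simp
  qed
  finally show ?thesis using Gn bound unfolding G_def d_def by (simp add: algebra_simps)
qed

lemma simsun_des_bound:
  assumes p: "xs \<in> permutations_of_set {1..n}" and s: "simsun xs"
  shows "2 * des xs \<le> n"
  using slot_simsun[OF p simsun_ndd[OF p s], of "\<lambda>_. 0::int"] by simp

lemma simsun_rec:
  fixes F :: "nat \<Rightarrow> 'a::comm_ring_1"
  shows "(\<Sum>s\<in>{s\<in>permutations_of_set {1..Suc n}. simsun s}. F (des s))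
       = (\<Sum>xs\<in>{xs\<in>permutations_of_set {1..n}. simsun xs}.
            of_nat (des xs + 1) * F (des xs) + of_nat (n - 2 * des xs) * F (des xs + 1))"
proof -
  have "(\<Sum>s\<in>{s\<in>permutations_of_set {1..Suc n}. simsun s}. F (des s))
      = (\<Sum>s\<in>permutations_of_set {1..Suc n}. if simsun s then F (des s) else 0)"
    by (simp add: sum.inter_filter)
  also have "\<dots> = (\<Sum>xs\<in>permutations_of_set {1..n}. \<Sum>i\<in>{..n}.
        if simsun (insm (\<lambda>S. id) (Suc n) xs i) then F (des (insm (\<lambda>S. id) (Suc n) xs i)) else 0)"
    by (rule sum_insm_max[OF goodF_id])
  also have "\<dots> = (\<Sum>xs\<in>permutations_of_set {1..n}. if simsun xs then
        of_nat (des xs + 1) * F (des xs) + of_nat (n - 2 * des xs) * F (des xs + 1) else 0)"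
  proof (rule sum.cong[OF refl])
    fix xs assume p: "xs \<in> permutations_of_set {1..n}"
    have "(\<Sum>i\<in>{..n}. if simsun (insm (\<lambda>S. id) (Suc n) xs i) then F (des (insm (\<lambda>S. id) (Suc n) xs i)) else 0)
        = (\<Sum>i\<in>{..n}. if simsun xs then (if bad xs n i then 0 else F (des (insm (\<lambda>S. id) (Suc n) xs i))) else 0)"
      by (rule sum.cong[OF refl]) (auto simp: simsun_ins[OF p])
    also have "\<dots> = (if simsun xs then
        of_nat (des xs + 1) * F (des xs) + of_nat (n - 2 * des xs) * F (des xs + 1) else 0)"
      using slot_simsun[OF p simsun_ndd[OF p], of F] by auto
    finally show "(\<Sum>i\<in>{..n}. if simsun (insm (\<lambda>S. id) (Suc n) xs i) then F (des (insm (\<lambda>S. id) (Suc n) xs i)) else 0)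
        = (if simsun xs then of_nat (des xs + 1) * F (des xs) + of_nat (n - 2 * des xs) * F (des xs + 1) else 0)" .
  qed
  also have "\<dots> = (\<Sum>xs\<in>{xs\<in>permutations_of_set {1..n}. simsun xs}.
            of_nat (des xs + 1) * F (des xs) + of_nat (n - 2 * des xs) * F (des xs + 1))"
    by (rule sum.inter_filter[symmetric]) simp
  finally show ?thesis .
qed



definition AA :: "int poly" where "AA = 1 + X"
definition BB :: "int poly" where "BB = 1 + X * X"

lemma pderiv_AA: "pderiv AA = 1" unfolding AA_def by (simp add: pderiv_add pderiv_X)
lemma pderiv_BB: "pderiv BB = 2 * X" unfolding BB_def by (simp add: pderiv_add pderiv_mult pderiv_X)

lemma pderiv_pow: "pderiv (p ^ Suc k) = of_nat (Suc k) * p ^ k * pderiv (p :: int poly)"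
  by (simp only: pderiv_power_Suc smult_of_nat)

lemma LT_SS:
  "Lop (Suc (Suc k + 2 * Suc e)) (AA ^ Suc k * BB ^ Suc e)
     = 2 * (of_nat (Suc e + 1) * AA ^ (Suc k + 1) * BB ^ Suc e + of_nat (Suc k) * AA ^ (Suc k - 1) * BB ^ (Suc e + 1))"
proof -
  have D: "pderiv (AA ^ Suc k * BB ^ Suc e) = AA ^ Suc k * (of_nat (Suc e) * BB ^ e * (2 * X)) + BB ^ Suc e * (of_nat (Suc k) * AA ^ k * 1)"
    by (simp only: pderiv_mult pderiv_pow pderiv_AA pderiv_BB)
  have E: "AA ^ Suc k = AA * AA ^ k" "BB ^ Suc e = BB * BB ^ e" "AA ^ (Suc k + 1) = AA * (AA * AA ^ k)"
    "AA ^ (Suc k - 1) = AA ^ k" "BB ^ (Suc e + 1) = BB * (BB * BB ^ e)" by simp_all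
  have N: "(of_nat (Suc (Suc k + 2 * Suc e)) :: int poly) - 1 = of_nat k + 2 * of_nat e + 3"
    "(of_nat (Suc e + 1) :: int poly) = of_nat e + 2" "(of_nat (Suc e)::int poly) = of_nat e + 1"
    "(of_nat (Suc k)::int poly) = of_nat k + 1" by simp_all
  show ?thesis unfolding Lop_def D unfolding E N unfolding AA_def BB_def by algebra
qed

lemma LT_S0:
  "Lop (Suc (Suc k + 2 * 0)) (AA ^ Suc k * BB ^ 0)
     = 2 * (of_nat (0 + 1) * AA ^ (Suc k + 1) * BB ^ 0 + of_nat (Suc k) * AA ^ (Suc k - 1) * BB ^ (0 + 1))"
proof -
  have D: "pderiv (AA ^ Suc k * BB ^ 0) = BB ^ 0 * (of_nat (Suc k) * AA ^ k * 1)"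
    by (simp only: power_0 mult_1_right mult_1_left pderiv_pow pderiv_AA)
  have E: "AA ^ Suc k = AA * AA ^ k" "BB ^ 0 = 1" "AA ^ (Suc k + 1) = AA * (AA * AA ^ k)"
    "AA ^ (Suc k - 1) = AA ^ k" "BB ^ (0 + 1) = BB" by simp_all
  have N: "(of_nat (Suc (Suc k + 2 * 0)) :: int poly) - 1 = of_nat k + 1"
    "(of_nat (0 + 1) :: int poly) = 1"
    "(of_nat (Suc k)::int poly) = of_nat k + 1" by simp_all
  show ?thesis unfolding Lop_def D unfolding E N unfolding AA_def BB_def by algebra
qed

lemma LT_0S:
  "Lop (Suc (0 + 2 * Suc e)) (AA ^ 0 * BB ^ Suc e)
     = 2 * (of_nat (Suc e + 1) * AA ^ (0 + 1) * BB ^ Suc e + of_nat 0 * AA ^ (0 - 1) * BB ^ (Suc e + 1))"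
proof -
  have D: "pderiv (AA ^ 0 * BB ^ Suc e) = AA ^ 0 * (of_nat (Suc e) * BB ^ e * (2 * X))"
    by (simp only: power_0 mult_1_right mult_1_left pderiv_pow pderiv_BB)
  have E: "AA ^ 0 = 1" "BB ^ Suc e = BB * BB ^ e" "AA ^ (0 + 1) = AA" by simp_all
  have N: "(of_nat (Suc (0 + 2 * Suc e)) :: int poly) - 1 = 2 * of_nat e + 2"
    "(of_nat (Suc e + 1) :: int poly) = of_nat e + 2" "(of_nat (Suc e)::int poly) = of_nat e + 1"
    "(of_nat 0::int poly) = 0" by simp_all
  show ?thesis unfolding Lop_def D unfolding E N unfolding AA_def BB_def by algebra
qed

lemma LT_00:
  "Lop (Suc (0 + 2 * 0)) (AA ^ 0 * BB ^ 0)
     = 2 * (of_nat (0 + 1) * AA ^ (0 + 1) * BB ^ 0 + of_nat 0 * AA ^ (0 - 1) * BB ^ (0 + 1))"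
  unfolding Lop_def AA_def by simp

lemma Lop_term:
  "Lop (Suc (m + 2 * d)) (AA ^ m * BB ^ d)
     = 2 * (of_nat (d + 1) * AA ^ (m + 1) * BB ^ d + of_nat m * AA ^ (m - 1) * BB ^ (d + 1))"
  by (cases m; cases d) (simp only: LT_SS LT_S0 LT_0S LT_00)+



definition Pn :: "nat \<Rightarrow> int poly" where
  "Pn n = (\<Sum>xs\<in>{xs\<in>permutations_of_set {1..n}. simsun xs}. AA ^ (n - 2 * des xs) * BB ^ des xs)"

lemma alt1: "alt_eulerian 1 = 1"
proof -
  have "altdes [1] = 0" unfolding altdes_def alt_des_set_def by simp
  then show ?thesis unfolding alt_eulerian_def by simp
qed

lemma simsun_Nil: "simsun []" unfolding simsun_def no_double_descents_def by simp

lemma Pn0: "Pn 0 = 1"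
proof -
  have "des [] = 0" unfolding des_def by simp
  moreover have "{xs \<in> permutations_of_set {1..0}. simsun xs} = {[]}" using simsun_Nil by auto
  ultimately show ?thesis unfolding Pn_def by simp
qed

theorem alt_P: "alt_eulerian (Suc n) = Pn n"
proof (induction n)
  case 0
  then show ?case using alt1 Pn0 by simp
next
  case (Suc n)
  define F where "F k = AA ^ (Suc n - 2 * k) * BB ^ k" for k
  have "2 * alt_eulerian (Suc (Suc n)) = Lop (Suc n) (Pn n)"
    using alt_rec[of "Suc n"] Suc.IH by simp
  also have "\<dots> = (\<Sum>xs\<in>{xs\<in>permutations_of_set {1..n}. simsun xs}. Lop (Suc n) (AA ^ (n - 2 * des xs) * BB ^ des xs))"
    unfolding Pn_def Lop_sum ..
  also have "\<dots> = (\<Sum>xs\<in>{xs\<in>permutations_of_set {1..n}. simsun xs}.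
      2 * (of_nat (des xs + 1) * F (des xs) + of_nat (n - 2 * des xs) * F (des xs + 1)))"
  proof (rule sum.cong[OF refl])
    fix xs assume "xs \<in> {xs\<in>permutations_of_set {1..n}. simsun xs}"
    then have b: "2 * des xs \<le> n" using simsun_des_bound by blast
    define m where "m = n - 2 * des xs"
    define d where "d = des xs"
    have nm: "n = m + 2 * d" using b unfolding m_def d_def by simp
    have L: "Lop (Suc n) (AA ^ m * BB ^ d) = 2 * (of_nat (d + 1) * AA ^ (m + 1) * BB ^ d + of_nat m * AA ^ (m - 1) * BB ^ (d + 1))"
      using Lop_term[of m d] nm by simp
    have F1: "F d = AA ^ (m + 1) * BB ^ d" unfolding F_def using nm by (simp add: Suc_diff_le)
    have F2: "of_nat m * F (d + 1) = of_nat m * AA ^ (m - 1) * BB ^ (d + 1)"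
    proof (cases m)
      case 0 then show ?thesis by simp
    next
      case (Suc k)
      then have "Suc n - 2 * (d + 1) = m - 1" using nm by simp
      then show ?thesis unfolding F_def by simp
    qed
    have R: "2 * (of_nat (d+1) * F d + of_nat m * F (d+1)) = 2 * (of_nat (d + 1) * AA ^ (m + 1) * BB ^ d + of_nat m * AA ^ (m - 1) * BB ^ (d + 1))"
      unfolding F1 F2 by (simp add: algebra_simps)
    have eq: "des xs = d" "n - 2 * d = m" unfolding m_def d_def by simp_all
    show "Lop (Suc n) (AA ^ (n - 2 * des xs) * BB ^ des xs) =
      2 * (of_nat (des xs + 1) * F (des xs) + of_nat (n - 2 * des xs) * F (des xs + 1))"
      unfolding eq using L R by simp
  qed
  also have "\<dots> = 2 * (\<Sum>xs\<in>{xs\<in>permutations_of_set {1..n}. simsun xs}.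
      of_nat (des xs + 1) * F (des xs) + of_nat (n - 2 * des xs) * F (des xs + 1))"
    by (simp add: sum_distrib_left)
  also have "\<dots> = 2 * Pn (Suc n)"
  proof -
    have "Pn (Suc n) = (\<Sum>s\<in>{s\<in>permutations_of_set {1..Suc n}. simsun s}. F (des s))"
      unfolding Pn_def F_def ..
    then show ?thesis using simsun_rec[of F n] by simp
  qed
  finally have "2 * alt_eulerian (Suc (Suc n)) = 2 * Pn (Suc n)" .
  then show ?case by simp
qed



definition cc :: "int poly \<Rightarrow> int \<Rightarrow> int" where
  "cc f z = (if z < 0 then 0 else coeff f (nat z))"

lemma cc_neg: "z < 0 \<Longrightarrow> cc f z = 0" by (simp add: cc_def)
lemma cc_add: "cc (f + g) z = cc f z + cc g z" by (simp add: cc_def)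
lemma cc_diff: "cc (f - g) z = cc f z - cc g z" by (simp add: cc_def)
lemma cc_minus: "cc (- f) z = - cc f z" by (simp add: cc_def)
lemma cc_of_nat: "cc (of_nat m * f) z = of_nat m * cc f z" by (simp add: cc_def of_nat_poly)
lemma cc_numeral: "cc (numeral m * f) z = numeral m * cc f z"
  by (simp add: cc_def numeral_poly)
lemma cc_X: "cc (X * f) z = cc f (z - 1)"
  by (auto simp: cc_def X_def coeff_pCons nat_diff_distrib split: nat.split)
lemma cc_pderiv: "cc (pderiv f) z = (z + 1) * cc f (z + 1)"
  by (auto simp: cc_def coeff_pderiv nat_add_distrib)


lemma cc_Lop: "cc (Lop n p) z = (int n + 1 - z) * (cc p z + cc p (z - 2)) + (z + 1) * (cc p (z + 1) + cc p (z - 1))"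
proof -
  let ?r = "of_nat n * p - p + pderiv p - X * pderiv p"
  have e: "Lop n p = 2 * p + 2 * (X * p) + ?r + X * (X * ?r)"
    unfolding Lop_def by (simp add: algebra_simps)
  have "cc (Lop n p) z = 2 * cc p z + 2 * cc p (z - 1)
      + (int n * cc p z - cc p z + (z + 1) * cc p (z + 1) - z * cc p z)
      + (int n * cc p (z - 2) - cc p (z - 2) + (z - 2 + 1) * cc p (z - 2 + 1) - (z - 1 - 1) * cc p (z - 1 - 1))"
    unfolding e by (simp only: cc_add cc_diff cc_numeral cc_X cc_of_nat cc_pderiv) (simp add: algebra_simps)
  also have "\<dots> = (int n + 1 - z) * (cc p z + cc p (z - 2)) + (z + 1) * (cc p (z + 1) + cc p (z - 1))"
    by (simp add: algebra_simps)
  finally show ?thesis .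
qed

definition invA :: "nat \<Rightarrow> int poly \<Rightarrow> bool" where
  "invA n p \<longleftrightarrow> (\<forall>a b. a + b = int n - 1 \<longrightarrow> cc p a = cc p b) \<and> (\<forall>z. 0 \<le> cc p z) \<and> 0 < cc p 0
     \<and> (\<forall>i j. i \<le> j \<and> i + j \<le> int n - 1 \<longrightarrow> cc p i \<le> cc p j)"

lemma chain_mono:
  fixes f :: "int \<Rightarrow> int"
  assumes st: "\<And>k. 2 * k \<le> N \<Longrightarrow> f (k - 1) \<le> f k"
  shows "i \<le> j \<Longrightarrow> 2 * j \<le> N \<Longrightarrow> f i \<le> f j"
proof (induction "nat (j - i)" arbitrary: j)
  case 0 then show ?case by simp
next
  case (Suc m)
  have "f i \<le> f (j - 1)" using Suc by (intro Suc.hyps) auto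
  also have "\<dots> \<le> f j" using st Suc.prems by simp
  finally show ?case .
qed

lemma inv_step:
  assumes invA: "invA n p" and n: "1 \<le> n" and q: "2 * q = Lop n p"
  shows "invA (Suc n) q"
proof -
  define c where "c = cc p"
  define d where "d = cc q"
  have symc: "a + b = int n - 1 \<Longrightarrow> c a = c b" for a b using invA unfolding invA_def c_def by blast
  have nn: "0 \<le> c z" for z using invA unfolding invA_def c_def by blast
  have c0: "0 < c 0" using invA unfolding invA_def c_def by blast
  have mo: "i \<le> j \<Longrightarrow> i + j \<le> int n - 1 \<Longrightarrow> c i \<le> c j" for i j using invA unfolding invA_def c_def by blast
  have rec: "2 * d z = (int n + 1 - z) * (c z + c (z - 2)) + (z + 1) * (c (z + 1) + c (z - 1))" for z
  proof -
    have "cc (2 * q) z = 2 * d z" unfolding d_def by (simp only: cc_numeral)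
    then show ?thesis using cc_Lop[of n p z] q unfolding c_def by simp
  qed
  have dneg: "z < 0 \<Longrightarrow> d z = 0" for z unfolding d_def by (rule cc_neg)
  have symd: "d z = d (int n - z)" for z
  proof -
    have "2 * d (int n - z) = (z + 1) * (c (int n - z) + c (int n - z - 2)) + (int n - z + 1) * (c (int n - z + 1) + c (int n - z - 1))"
      using rec[of "int n - z"] by (simp add: algebra_simps)
    also have "c (int n - z) = c (z - 1)" by (rule symc) simp
    also have "c (int n - z - 2) = c (z + 1)" by (rule symc) simp
    also have "c (int n - z + 1) = c (z - 2)" by (rule symc) simp
    also have "c (int n - z - 1) = c z" by (rule symc) simp
    finally have "2 * d (int n - z) = 2 * d z" using rec[of z] by (simp add: algebra_simps)
    then show ?thesis by simp
  qed
  have symd': "a + b = int (Suc n) - 1 \<Longrightarrow> d a = d b" for a b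
    using symd[of a] by (simp add: algebra_simps) (metis add_diff_cancel_left')
  have nnd: "0 \<le> d z" for z
  proof (cases "z < 0")
    case True then show ?thesis using dneg by simp
  next
    case False
    show ?thesis
    proof (cases "z \<le> int n + 1")
      case True
      have "0 \<le> (int n + 1 - z) * (c z + c (z - 2)) + (z + 1) * (c (z + 1) + c (z - 1))"
        using True False nn by (intro add_nonneg_nonneg mult_nonneg_nonneg) (auto intro: add_nonneg_nonneg)
      then show ?thesis using rec[of z] by simp
    next
      case False
      then show ?thesis using symd[of z] dneg[of "int n - z"] by simp
    qed
  qed
  have d0: "0 < d 0"
  proof -
    have "2 * d 0 = (int n + 1) * c 0 + c 1" using rec[of 0] cc_neg[of "-2" p] cc_neg[of "-1" p] unfolding c_def by simp
    moreover have "0 < (int n + 1) * c 0" using c0 by simp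
    ultimately show ?thesis using nn[of 1] by simp
  qed
  have step: "d (k - 1) \<le> d k" if k: "2 * k \<le> int n" for k
  proof (cases "k \<le> 0")
    case True then show ?thesis using dneg[of "k - 1"] nnd[of k] by simp
  next
    case False
    have e: "2 * (d k - d (k - 1)) = (k + 1) * (c (k + 1) - c (k - 3)) + (int n + 1 - 2 * k) * (c k - c (k - 1) + c (k - 2) - c (k - 3))"
      using rec[of k] rec[of "k - 1"] by (simp add: algebra_simps)
    have m1: "c (k - 3) \<le> c (k + 1)" using k by (intro mo) auto
    have m2: "c (k - 1) \<le> c k" using k by (intro mo) auto
    have m3: "c (k - 3) \<le> c (k - 2)" using k by (intro mo) auto
    have "0 \<le> (k + 1) * (c (k + 1) - c (k - 3)) + (int n + 1 - 2 * k) * (c k - c (k - 1) + c (k - 2) - c (k - 3))"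
      using False k m1 m2 m3 by (intro add_nonneg_nonneg mult_nonneg_nonneg) auto
    then show ?thesis using e by simp
  qed
  have mod: "d i \<le> d j" if "i \<le> j" "i + j \<le> int (Suc n) - 1" for i j
  proof (cases "2 * j \<le> int n")
    case True then show ?thesis using chain_mono[of "int n" d i j] step that by blast
  next
    case False
    have "d i \<le> d (int n - j)" using chain_mono[of "int n" d i "int n - j"] step that False by auto
    then show ?thesis using symd[of j] by simp
  qed
  show ?thesis unfolding invA_def d_def[symmetric] using symd' nnd d0 mod by blast
qed

lemma inv_1: "invA 1 1"
proof -
  have c: "cc 1 z = (if z = 0 then 1 else 0)" for z by (simp add: cc_def)
  show ?thesis unfolding invA_def c by auto
qed

lemma inv_alt: "1 \<le> n \<Longrightarrow> invA n (alt_eulerian n)"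
proof (induction n rule: dec_induct)
  case base then show ?case using alt1 inv_1 by simp
next
  case (step m)
  then show ?case using inv_step[OF step.IH step.hyps(1) alt_rec[OF step.hyps(1)]] by simp
qed

lemma coeff_cc: "coeff p i = cc p (int i)" by (simp add: cc_def)

lemma inv_pal_uni:
  assumes invA: "invA n p" and n: "1 \<le> n"
  shows "degree p = n - 1 \<and> palindromic p \<and> unimodal p"
proof -
  have symc: "a + b = int n - 1 \<Longrightarrow> cc p a = cc p b" for a b using invA unfolding invA_def by blast
  have c0: "0 < cc p 0" using invA unfolding invA_def by blast
  have mo: "i \<le> j \<Longrightarrow> i + j \<le> int n - 1 \<Longrightarrow> cc p i \<le> cc p j" for i j using invA unfolding invA_def by blast
  have z: "coeff p i = 0" if "n - 1 < i" for i
  proof -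
    have "cc p (int i) = cc p (int n - 1 - int i)" by (rule symc) simp
    also have "\<dots> = 0" using that n by (intro cc_neg) simp
    finally show ?thesis by (simp add: coeff_cc)
  qed
  have top: "coeff p (n - 1) \<noteq> 0"
  proof -
    have "cc p (int (n - 1)) = cc p 0" by (rule symc) (use n in simp)
    then show ?thesis using c0 by (simp add: coeff_cc)
  qed
  have deg: "degree p = n - 1"
  proof (rule antisym)
    show "degree p \<le> n - 1" by (rule degree_le) (use z in auto)
    show "n - 1 \<le> degree p" by (rule le_degree) (rule top)
  qed
  have pal: "palindromic p" unfolding palindromic_def deg
  proof (intro allI impI)
    fix i assume "i \<le> n - 1"
    then show "coeff p i = coeff p (n - 1 - i)" unfolding coeff_cc by (intro symc) (use n in simp)
  qed
  have uni: "unimodal p" unfolding unimodal_def deg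
  proof (intro exI[of _ "(n - 1) div 2"] conjI allI impI)
    show "(n - 1) div 2 \<le> n - 1" by simp
  next
    fix i j assume "i \<le> j \<and> j \<le> (n - 1) div 2"
    then show "coeff p i \<le> coeff p j" unfolding coeff_cc by (intro mo) (use n in auto)
  next
    fix i j assume h: "(n - 1) div 2 \<le> i \<and> i \<le> j \<and> j \<le> n - 1"
    show "coeff p j \<le> coeff p i"
    proof (cases "i = j")
      case True then show ?thesis by simp
    next
      case False
      have "cc p (int (n - 1 - j)) \<le> cc p (int (n - 1 - i))" using h False n by (intro mo) auto
      moreover have "cc p (int j) = cc p (int (n - 1 - j))" by (rule symc) (use h n in arith)
      moreover have "cc p (int i) = cc p (int (n - 1 - i))" by (rule symc) (use h n in arith)
      ultimately show ?thesis unfolding coeff_cc by simp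
    qed
  qed
  show ?thesis using deg pal uni by simp
qed


abbreviation W :: "int poly" where "W \<equiv> [:0, -2:]"

lemma AA_eq: "AA = [:1, 1:]" unfolding AA_def X_def by (simp add: one_pCons)
lemma BB_eq: "BB = W + AA ^ 2"
  unfolding BB_def AA_def X_def by (simp add: one_pCons power2_eq_square algebra_simps)

lemma W_pow: "W ^ k = monom ((-2) ^ k) k"
proof -
  have "W = monom (-2) 1" by (simp add: monom_Suc monom_0)
  then show ?thesis by (simp add: monom_power)
qed

lemma term_expand:
  assumes d: "2 * d \<le> N"
  shows "AA ^ (N - 2 * d) * BB ^ d = (\<Sum>k\<le>N div 2. smult (int (d choose k)) (W ^ k * AA ^ (N - 2 * k)))"
proof -
  have "AA ^ (N - 2 * d) * BB ^ d = AA ^ (N - 2 * d) * (\<Sum>k\<le>d. of_nat (d choose k) * W ^ k * (AA ^ 2) ^ (d - k))"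
    unfolding BB_eq binomial_ring ..
  also have "\<dots> = (\<Sum>k\<le>d. smult (int (d choose k)) (W ^ k * AA ^ (N - 2 * k)))"
    unfolding sum_distrib_left
  proof (rule sum.cong[OF refl])
    fix k assume "k \<in> {..d}"
    then have "N - 2 * d + 2 * (d - k) = N - 2 * k" using d by auto
    then have E: "AA ^ (N - 2 * d) * (AA ^ 2) ^ (d - k) = AA ^ (N - 2 * k)"
      by (simp only: power_mult[symmetric] power_add[symmetric])
    have "AA ^ (N - 2 * d) * (of_nat (d choose k) * W ^ k * (AA ^ 2) ^ (d - k))
        = of_nat (d choose k) * (W ^ k * (AA ^ (N - 2 * d) * (AA ^ 2) ^ (d - k)))"
      by (simp only: mult.assoc mult.left_commute)
    also have "\<dots> = smult (int (d choose k)) (W ^ k * AA ^ (N - 2 * k))"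
      unfolding E smult_of_nat ..
    finally show "AA ^ (N - 2 * d) * (of_nat (d choose k) * W ^ k * (AA ^ 2) ^ (d - k)) = smult (int (d choose k)) (W ^ k * AA ^ (N - 2 * k))" .
  qed
  also have "\<dots> = (\<Sum>k\<le>N div 2. smult (int (d choose k)) (W ^ k * AA ^ (N - 2 * k)))"
    by (rule sum.mono_neutral_left) (use d in auto)
  finally show ?thesis .
qed


definition acoef :: "nat \<Rightarrow> nat \<Rightarrow> int" where
  "acoef N k = (\<Sum>xs\<in>{xs\<in>permutations_of_set {1..N}. simsun xs}. int (des xs choose k))"

lemma Pn_expand: "Pn N = (\<Sum>k\<le>N div 2. smult (acoef N k) (W ^ k * AA ^ (N - 2 * k)))"
proof -
  have "Pn N = (\<Sum>xs\<in>{xs\<in>permutations_of_set {1..N}. simsun xs}.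
      \<Sum>k\<le>N div 2. smult (int (des xs choose k)) (W ^ k * AA ^ (N - 2 * k)))"
    unfolding Pn_def
  proof (rule sum.cong[OF refl])
    fix xs assume "xs \<in> {xs\<in>permutations_of_set {1..N}. simsun xs}"
    then have "2 * des xs \<le> N" using simsun_des_bound by blast
    then show "AA ^ (N - 2 * des xs) * BB ^ des xs = (\<Sum>k\<le>N div 2. smult (int (des xs choose k)) (W ^ k * AA ^ (N - 2 * k)))"
      by (rule term_expand)
  qed
  also have "\<dots> = (\<Sum>k\<le>N div 2. \<Sum>xs\<in>{xs\<in>permutations_of_set {1..N}. simsun xs}.
      smult (int (des xs choose k)) (W ^ k * AA ^ (N - 2 * k)))"
    by (rule sum.swap)
  also have "\<dots> = (\<Sum>k\<le>N div 2. smult (acoef N k) (W ^ k * AA ^ (N - 2 * k)))"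
    unfolding acoef_def smult_sum ..
  finally show ?thesis .
qed

lemma indep:
  assumes z: "(\<Sum>k\<le>M. smult (c k) (W ^ k * AA ^ (N - 2 * k))) = 0"
  shows "k \<le> M \<Longrightarrow> c k = 0"
proof (induction k rule: less_induct)
  case (less k)
  have cf: "coeff (W ^ j * AA ^ m) k = (if k < j then 0 else (-2) ^ j * coeff (AA ^ m) (k - j))" for j m
    unfolding W_pow coeff_monom_mult ..
  have a0: "coeff (AA ^ m) 0 = 1" for m by (simp add: coeff_0_power AA_eq)
  have "0 = coeff (\<Sum>j\<le>M. smult (c j) (W ^ j * AA ^ (N - 2 * j))) k" using z by simp
  also have "\<dots> = (\<Sum>j\<le>M. c j * coeff (W ^ j * AA ^ (N - 2 * j)) k)" by (simp add: coeff_sum)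
  also have "\<dots> = (\<Sum>j\<le>M. if j = k then c k * (-2) ^ k else 0)"
  proof (rule sum.cong[OF refl])
    fix j assume "j \<in> {..M}"
    show "c j * coeff (W ^ j * AA ^ (N - 2 * j)) k = (if j = k then c k * (-2) ^ k else 0)"
    proof (cases "j < k")
      case True then show ?thesis using less.IH[of j] less.prems by simp
    next
      case False then show ?thesis unfolding cf using a0 by auto
    qed
  qed
  also have "\<dots> = c k * (-2) ^ k" using less.prems by simp
  finally show ?case by simp
qed

lemma pcompose_X_pow: "pcompose ([:0, 1:] ^ k) q = q ^ k"
  by (induction k) (simp_all add: pcompose_mult pcompose_pCons pcompose_1)

lemma pcompose_acoef:
  "pcompose (\<Sum>k\<le>N div 2. monom (acoef N k) k) [:-1, 1:] = simsun_des_poly N"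
proof -
  let ?V = "[:-1, 1:] :: int poly"
  have "pcompose (\<Sum>k\<le>N div 2. monom (acoef N k) k) ?V = (\<Sum>k\<le>N div 2. smult (acoef N k) (?V ^ k))"
    unfolding pcompose_sum by (simp add: monom_altdef pcompose_smult pcompose_X_pow)
  also have "\<dots> = (\<Sum>k\<le>N div 2. \<Sum>xs\<in>{xs\<in>permutations_of_set {1..N}. simsun xs}. of_nat (des xs choose k) * ?V ^ k)"
    unfolding acoef_def smult_sum by (simp add: smult_of_nat)
  also have "\<dots> = (\<Sum>xs\<in>{xs\<in>permutations_of_set {1..N}. simsun xs}. \<Sum>k\<le>N div 2. of_nat (des xs choose k) * ?V ^ k)"
    by (rule sum.swap)
  also have "\<dots> = (\<Sum>xs\<in>{xs\<in>permutations_of_set {1..N}. simsun xs}. monom 1 (des xs))"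
  proof (rule sum.cong[OF refl])
    fix xs assume xs: "xs \<in> {xs\<in>permutations_of_set {1..N}. simsun xs}"
    then have b: "des xs \<le> N div 2" using simsun_des_bound by fastforce
    have "(\<Sum>k\<le>N div 2. of_nat (des xs choose k) * ?V ^ k) = (\<Sum>k\<le>des xs. of_nat (des xs choose k) * ?V ^ k)"
      by (rule sum.mono_neutral_right) (use b in auto)
    also have "\<dots> = (\<Sum>k\<le>des xs. of_nat (des xs choose k) * ?V ^ k * 1 ^ (des xs - k))" by simp
    also have "\<dots> = (?V + 1) ^ des xs" unfolding binomial_ring ..
    also have "?V + 1 = [:0, 1:]" by (simp add: one_pCons)
    finally show "(\<Sum>k\<le>N div 2. of_nat (des xs choose k) * ?V ^ k) = monom 1 (des xs)"
      by (simp add: monom_altdef)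
  qed
  also have "\<dots> = simsun_des_poly N" unfolding simsun_des_poly_def ..
  finally show ?thesis .
qed



theorem theorem1p1:
  fixes n :: nat
  assumes "n \<ge> 1"
  shows "palindromic (alt_eulerian n) \<and> unimodal (alt_eulerian n) \<and>
    (\<exists>a :: nat \<Rightarrow> int. alt_eulerian n =
        (\<Sum>k\<le>(n - 1) div 2. smult (a k) ([:0, -2:] ^ k * [:1, 1:] ^ (n - 1 - 2 * k)))) \<and>
    (\<forall>a :: nat \<Rightarrow> int. alt_eulerian n =
        (\<Sum>k\<le>(n - 1) div 2. smult (a k) ([:0, -2:] ^ k * [:1, 1:] ^ (n - 1 - 2 * k)))
      \<longrightarrow> pcompose (\<Sum>k\<le>(n - 1) div 2. monom (a k) k) [:-1, 1:] = simsun_des_poly (n - 1))"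
proof -
  define N where "N = n - 1"
  have nN: "n = Suc N" using assms unfolding N_def by simp
  have PU: "palindromic (alt_eulerian n) \<and> unimodal (alt_eulerian n)"
    using inv_pal_uni[OF inv_alt[OF assms] assms] by simp
  have E: "alt_eulerian n = (\<Sum>k\<le>N div 2. smult (acoef N k) (W ^ k * [:1, 1:] ^ (N - 2 * k)))"
    using alt_P[of N] Pn_expand[of N] nN AA_eq by simp
  have U: "pcompose (\<Sum>k\<le>N div 2. monom (b k) k) [:-1, 1:] = simsun_des_poly N"
    if hb: "alt_eulerian n = (\<Sum>k\<le>N div 2. smult (b k) (W ^ k * [:1, 1:] ^ (N - 2 * k)))" for b
  proof -
    have z: "(\<Sum>k\<le>N div 2. smult ((\<lambda>k. b k - acoef N k) k) (W ^ k * AA ^ (N - 2 * k))) = 0"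
      using hb E unfolding AA_eq by (simp add: smult_diff_left sum_subtractf)
    have "b k - acoef N k = 0" if "k \<le> N div 2" for k using indep[OF z that] by simp
    then have "(\<Sum>k\<le>N div 2. monom (b k) k) = (\<Sum>k\<le>N div 2. monom (acoef N k) k)"
      by (intro sum.cong) auto
    then show ?thesis using pcompose_acoef by simp
  qed
  show ?thesis unfolding N_def[symmetric] using PU E U by blast
qed


end
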